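(* Suppose that for each $j=0,\dots,n$ the kernel $K_j$ belongs to $\mathrm{C}^2(0,2\pi)$ with $K_j''<0$ on $(0,2\pi)$. Let $S=S_\sigma$ be a simplex and let $\mathbf{y}\in S$ be such that $z_j(\mathbf{y})$ lies in the interior of $I_j(\mathbf{y})$ for each $j=0,\dots,n$. Then the Jacobian matrix of the map \[\Delta_\sigma(\mathbf{y})=\big(m_{\sigma(1)}(\mathbf{y})-m_{\sigma(0)}(\mathbf{y}),\dots,m_{\sigma(n)}(\mathbf{y})-m_{\sigma(n-1)}(\mathbf{y})\big)^\top\] at $\mathbf{y}$ is non-singular.
   Context: Identify the torus $\mathbb{T}=\mathbb{R}/2\pi\mathbb{Z}$ with $[0,2\pi)$. The kernels $K_j$ are $2\pi$-periodic functions $\mathbb{R}\to[-\infty,\infty)$, real-valued and concave on $(0,2\pi)$, with $\lim_{t\downarrow0}K_j(t)=\lim_{t\uparrow2\pi}K_j(t)$ existing in $[-\infty,\infty)$. For $\mathbf{y}\in\mathbb{T}^n$ put $y_0=0$, $y_{n+1}=2\pi$, $F(\mathbf{y},t)=K_0(t)+\sum_{j=1}^nK_j(t-y_j)$. For a permutation $\sigma$ of $\{1,\dots,n\}$ ($\sigma(0)=0,\sigma(n+1)=n+1$), $S_\sigma=\{\mathbf{y}:0<y_{\sigma(1)}<\dots<y_{\sigma(n)}<2\pi\}$; for $\mathbf{y}\in S_\sigma$, $I_{\sigma(k)}(\mathbf{y})=[y_{\sigma(k)},y_{\sigma(k+1)}]$, $m_{\sigma(k)}(\mathbf{y})=\sup_{t\in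 I_{\sigma(k)}(\mathbf{y})}F(\mathbf{y},t)$, and $z_{\sigma(k)}(\mathbf{y})$ is the unique point of $I_{\sigma(k)}(\mathbf{y})$ where $F(\mathbf{y},\cdot)$ attains this maximum. Under the hypotheses, each $m_j$ is continuously differentiable on $S_\sigma$, so the Jacobian makes sense. *)

theory Defs
  imports "HOL-Analysis.Analysis" "Jordan_Normal_Form.Determinant"
begin

text \<open>Kernels K j :: real => ereal, values in [-inf,inf); y :: nat => real, coordinates 1..n used.\<close>

definition C2_on :: "real set \<Rightarrow> (real \<Rightarrow> real) \<Rightarrow> bool" where
  "C2_on S f \<longleftrightarrow> (\<exists>f' f''. (\<forall>t\<in>S. (f has_real_derivative f' t) (at t)
        \<and> (f' has_real_derivative f'' t) (at t)) \<and> continuous_on S f'')"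

definition ext_pt :: "nat \<Rightarrow> (nat \<Rightarrow> real) \<Rightarrow> nat \<Rightarrow> real" where
  "ext_pt n y j = (if j = 0 then 0 else if j = Suc n then 2 * pi else y j)"

definition Fker :: "nat \<Rightarrow> (nat \<Rightarrow> real \<Rightarrow> ereal) \<Rightarrow> (nat \<Rightarrow> real) \<Rightarrow> real \<Rightarrow> ereal" where
  "Fker n K y t = K 0 t + (\<Sum>j\<in>{1..n}. K j (t - y j))"

text \<open>S_sigma: 0 < y_sigma(1) < ... < y_sigma(n) < 2 pi\<close>
definition simplex_sigma :: "nat \<Rightarrow> (nat \<Rightarrow> nat) \<Rightarrow> (nat \<Rightarrow> real) set" where
  "simplex_sigma n \<sigma> = {y. \<forall>k\<le>n. ext_pt n y (\<sigma> k) < ext_pt n y (\<sigma> (Suc k))}"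

text \<open>I_{sigma(k)}(y) = [y_sigma(k), y_sigma(k+1)], k = 0..n\<close>
definition Iint :: "nat \<Rightarrow> (nat \<Rightarrow> nat) \<Rightarrow> (nat \<Rightarrow> real) \<Rightarrow> nat \<Rightarrow> real set" where
  "Iint n \<sigma> y k = {ext_pt n y (\<sigma> k) .. ext_pt n y (\<sigma> (Suc k))}"

text \<open>m_{sigma(k)}(y) = sup of F(y,.) over I_{sigma(k)}(y)\<close>
definition mval :: "nat \<Rightarrow> (nat \<Rightarrow> real \<Rightarrow> ereal) \<Rightarrow> (nat \<Rightarrow> nat) \<Rightarrow> (nat \<Rightarrow> real) \<Rightarrow> nat \<Rightarrow> real" where
  "mval n K \<sigma> y k = real_of_ereal (Sup (Fker n K y ` Iint n \<sigma> y k))"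

text \<open>z_{sigma(k)}(y): the unique maximiser of F(y,.) on I_{sigma(k)}(y)\<close>
definition zval :: "nat \<Rightarrow> (nat \<Rightarrow> real \<Rightarrow> ereal) \<Rightarrow> (nat \<Rightarrow> nat) \<Rightarrow> (nat \<Rightarrow> real) \<Rightarrow> nat \<Rightarrow> real" where
  "zval n K \<sigma> y k = (THE t. t \<in> Iint n \<sigma> y k \<and>
       Fker n K y t = Sup (Fker n K y ` Iint n \<sigma> y k))"

text \<open>Delta_sigma, component k = 1..n: m_{sigma(k)} - m_{sigma(k-1)}\<close>
definition Delta :: "nat \<Rightarrow> (nat \<Rightarrow> real \<Rightarrow> ereal) \<Rightarrow> (nat \<Rightarrow> nat) \<Rightarrow> (nat \<Rightarrow> real) \<Rightarrow> nat \<Rightarrow> real" where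
  "Delta n K \<sigma> y k = mval n K \<sigma> y k - mval n K \<sigma> y (k - 1)"

definition jacobian :: "nat \<Rightarrow> (nat \<Rightarrow> real \<Rightarrow> ereal) \<Rightarrow> (nat \<Rightarrow> nat) \<Rightarrow> (nat \<Rightarrow> real) \<Rightarrow> real mat" where
  "jacobian n K \<sigma> y = mat n n (\<lambda>(r, c).
      deriv (\<lambda>s. Delta n K \<sigma> (y(Suc c := s)) (Suc r)) (y (Suc c)))"

end

theory Submission
  imports Defs
begin


definition nd :: "nat \<Rightarrow> (nat \<Rightarrow> nat) \<Rightarrow> (nat \<Rightarrow> real) \<Rightarrow> nat \<Rightarrow> real" where
  "nd n \<sigma> y m = ext_pt n y (\<sigma> m)"

lemma sig_fix:
  assumes "\<sigma> permutes {1..n}"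
  shows "\<sigma> 0 = 0" "\<sigma> (Suc n) = Suc n"
  using assms by (auto simp: permutes_not_in)

lemma nd_ends:
  assumes "\<sigma> permutes {1..n}"
  shows "nd n \<sigma> y 0 = 0" "nd n \<sigma> y (Suc n) = 2 * pi"
  using sig_fix[OF assms] by (auto simp: nd_def ext_pt_def)

lemma nd_step:
  assumes "y \<in> simplex_sigma n \<sigma>" "k \<le> n"
  shows "nd n \<sigma> y k < nd n \<sigma> y (Suc k)"
  using assms by (auto simp: simplex_sigma_def nd_def)

lemma nd_mono:
  assumes "y \<in> simplex_sigma n \<sigma>" "m < m'" "m' \<le> Suc n"
  shows "nd n \<sigma> y m < nd n \<sigma> y m'"
  using assms(2,3)
proof (induction m' rule: less_induct)
  case (less m')
  then obtain q where q: "m' = Suc q" by (cases m') auto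
  show ?case
  proof (cases "m = q")
    case True thus ?thesis using nd_step[OF assms(1), of q] less q by auto
  next
    case False
    hence "nd n \<sigma> y m < nd n \<sigma> y q" using less q by auto
    thus ?thesis using nd_step[OF assms(1), of q] less q by auto
  qed
qed

lemma nd_mono_le:
  assumes "y \<in> simplex_sigma n \<sigma>" "m \<le> m'" "m' \<le> Suc n"
  shows "nd n \<sigma> y m \<le> nd n \<sigma> y m'"
  using nd_mono[OF assms(1), of m m'] assms by (cases "m = m'") auto

lemma ext_nd:
  assumes "\<sigma> permutes {1..n}" "i \<le> n"
  shows "inv_into UNIV \<sigma> i \<le> n" "ext_pt n y i = nd n \<sigma> y (inv_into UNIV \<sigma> i)"
proof -
  have pi: "inv_into UNIV \<sigma> permutes {1..n}" using permutes_inv[OF assms(1)] .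
  show "inv_into UNIV \<sigma> i \<le> n"
  proof (cases "i = 0")
    case True thus ?thesis using pi by (simp add: permutes_not_in)
  next
    case False hence "i \<in> {1..n}" using assms by auto
    thus ?thesis using permutes_in_image[OF pi] by auto
  qed
  show "ext_pt n y i = nd n \<sigma> y (inv_into UNIV \<sigma> i)"
    unfolding nd_def using permutes_inverses(1)[OF assms(1)] by simp
qed

lemma ext_range:
  assumes "\<sigma> permutes {1..n}" "y \<in> simplex_sigma n \<sigma>" "i \<le> n"
  shows "0 \<le> ext_pt n y i" "ext_pt n y i < 2 * pi"
proof -
  have "nd n \<sigma> y 0 \<le> nd n \<sigma> y (inv_into UNIV \<sigma> i)" "nd n \<sigma> y (inv_into UNIV \<sigma> i) < nd n \<sigma> y (Suc n)"
    using nd_mono_le[OF assms(2), of 0 "inv_into UNIV \<sigma> i"] nd_mono[OF assms(2), of "inv_into UNIV \<sigma> i" "Suc n"]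
      ext_nd[OF assms(1,3)] by auto
  thus "0 \<le> ext_pt n y i" "ext_pt n y i < 2 * pi"
    using ext_nd(2)[OF assms(1,3), where y=y] nd_ends[OF assms(1), of y] by auto
qed

lemma Iint_nd: "Iint n \<sigma> y k = {nd n \<sigma> y k .. nd n \<sigma> y (Suc k)}"
  by (simp add: Iint_def nd_def)

lemma node_side:
  assumes "\<sigma> permutes {1..n}" "y \<in> simplex_sigma n \<sigma>" "i \<le> n" "k \<le> n"
  shows "ext_pt n y i \<le> nd n \<sigma> y k \<or> nd n \<sigma> y (Suc k) \<le> ext_pt n y i"
proof (cases "inv_into UNIV \<sigma> i \<le> k")
  case True thus ?thesis using nd_mono_le[OF assms(2), of "inv_into UNIV \<sigma> i" k] ext_nd[OF assms(1,3)] assms by auto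
next
  case False thus ?thesis using nd_mono_le[OF assms(2), of "Suc k" "inv_into UNIV \<sigma> i"] ext_nd[OF assms(1,3)] assms by auto
qed


locale kern =
  fixes n :: nat and K :: "nat \<Rightarrow> real \<Rightarrow> ereal"
  assumes periodic: "\<And>j t. j \<le> n \<Longrightarrow> K j (t + 2 * pi) = K j t"
    and real_valued: "\<And>j t. j \<le> n \<Longrightarrow> t \<in> {0<..<2 * pi} \<Longrightarrow> K j t \<noteq> -\<infinity> \<and> K j t \<noteq> \<infinity>"
    and not_pinf: "\<And>j. j \<le> n \<Longrightarrow> K j 0 \<noteq> \<infinity>"
    and lim0: "\<And>j. j \<le> n \<Longrightarrow> (K j \<longlongrightarrow> K j 0) (at_right 0)"
    and lim2pi: "\<And>j. j \<le> n \<Longrightarrow> (K j \<longlongrightarrow> K j 0) (at_left (2 * pi))"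
    and C2: "\<And>j. j \<le> n \<Longrightarrow> C2_on {0<..<2 * pi} (\<lambda>t. real_of_ereal (K j t))"
    and neg2: "\<And>j t. j \<le> n \<Longrightarrow> t \<in> {0<..<2 * pi} \<Longrightarrow>
                  deriv (deriv (\<lambda>t. real_of_ereal (K j t))) t < 0"
begin

definition kr :: "nat \<Rightarrow> real \<Rightarrow> real" where "kr j t = real_of_ereal (K j t)"
definition d :: "nat \<Rightarrow> real \<Rightarrow> real" where "d j = deriv (kr j)"
definition tau :: "real \<Rightarrow> real" where "tau u = (if 0 < u then u else u + 2 * pi)"

lemma kr_per: "j \<le> n \<Longrightarrow> kr j (t + 2 * pi) = kr j t"
  by (simp add: kr_def periodic)

lemma K_real0: "j \<le> n \<Longrightarrow> 0 < u \<Longrightarrow> u < 2 * pi \<Longrightarrow> K j u = ereal (kr j u)"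
  using real_valued[of j u] by (cases "K j u") (auto simp: kr_def)

lemma K_real: assumes "j \<le> n" "-2*pi < u" "u < 2 * pi" "u \<noteq> 0"
  shows "K j u = ereal (kr j u)"
proof (cases "0 < u")
  case True thus ?thesis using K_real0 assms by auto
next
  case False
  hence "K j u = K j (u + 2*pi)" using periodic[OF assms(1), of u] by simp
  also have "\<dots> = ereal (kr j (u + 2 * pi))" using K_real0[OF assms(1)] assms False by auto
  finally show ?thesis using kr_per[OF assms(1)] by simp
qed

lemma tau_range: "-2*pi < u \<Longrightarrow> u < 2 * pi \<Longrightarrow> u \<noteq> 0 \<Longrightarrow> 0 < tau u \<and> tau u < 2 * pi"
  by (auto simp: tau_def)

lemma kr_der0: assumes "j \<le> n" "0 < t" "t < 2 * pi"
  shows "(kr j has_real_derivative d j t) (at t)"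
    "\<exists>D. (d j has_real_derivative D) (at t) \<and> D < 0"
proof -
  obtain f' f'' where ff: "\<forall>t\<in>{0<..<2*pi}. ((\<lambda>t. real_of_ereal (K j t)) has_real_derivative f' t) (at t)
        \<and> (f' has_real_derivative f'' t) (at t)"
    using C2[OF assms(1)] unfolding C2_on_def by blast
  have kd: "\<And>s. s \<in> {0<..<2*pi} \<Longrightarrow> (kr j has_real_derivative f' s) (at s)"
    using ff unfolding kr_def[abs_def] by auto
  hence deq: "\<And>s. s \<in> {0<..<2*pi} \<Longrightarrow> d j s = f' s"
    unfolding d_def using DERIV_imp_deriv by blast
  show "(kr j has_real_derivative d j t) (at t)" using kd[of t] deq[of t] assms by auto
  have "(d j has_real_derivative f'' t) (at t)"
    by (rule has_field_derivative_transform_within_open[of f' _ _ "{0<..<2*pi}"])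
       (use ff assms deq in auto)
  moreover have "deriv (d j) t = f'' t" using calculation DERIV_imp_deriv by blast
  moreover have "deriv (d j) t < 0" using neg2[OF assms(1), of t] assms
    unfolding d_def kr_def[abs_def] by auto
  ultimately show "\<exists>D. (d j has_real_derivative D) (at t) \<and> D < 0" by auto
qed

lemma d_strict: assumes "j \<le> n" "0 < a" "a < b" "b < 2 * pi"
  shows "d j b < d j a"
  by (rule DERIV_neg_imp_decreasing) (use assms kr_der0(2) in auto)

lemma d_cont: assumes "j \<le> n" "0 < t" "t < 2 * pi" shows "isCont (d j) t"
  using kr_der0(2)[OF assms] DERIV_isCont by blast

lemma kr_der: assumes "j \<le> n" "-2*pi < u" "u < 2 * pi" "u \<noteq> 0"
  shows "(kr j has_real_derivative d j (tau u)) (at u)"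
proof (cases "0 < u")
  case True thus ?thesis using kr_der0(1)[OF assms(1)] assms by (auto simp: tau_def)
next
  case False
  have "(kr j has_real_derivative d j (u + 2*pi)) (at (u + 2*pi))"
    using kr_der0(1)[OF assms(1)] assms False by auto
  hence "((\<lambda>x. kr j (x + 2*pi)) has_real_derivative d j (u + 2*pi)) (at u)"
    using DERIV_shift by blast
  moreover have "(\<lambda>x. kr j (x + 2*pi)) = kr j" using kr_per[OF assms(1)] by auto
  ultimately show ?thesis using False by (simp add: tau_def)
qed

lemma K_cont_open: assumes "j \<le> n" "0 < u" "u < 2 * pi" shows "isCont (K j) u"
proof -
  have "isCont (kr j) u" using kr_der0(1)[OF assms] DERIV_isCont by blast
  hence "isCont (\<lambda>v. ereal (kr j v)) u" by (intro continuous_intros) 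
  moreover have ev: "eventually (\<lambda>v. K j v = ereal (kr j v)) (nhds u)"
    using eventually_nhds_in_open[of "{0<..<2*pi}" u] assms
    by (auto elim!: eventually_mono intro: K_real0[OF assms(1)])
  ultimately show ?thesis using isCont_cong[OF ev] by simp
qed

lemma K_cont0: assumes "j \<le> n" shows "isCont (K j) 0"
proof -
  have sh: "filterlim (\<lambda>v. v + 2 * pi) (at_left (2 * pi)) (at_left (0::real))"
    unfolding filterlim_at
  proof
    show "\<forall>\<^sub>F x in at_left 0. x + 2 * pi \<in> {..<2 * pi} \<and> x + 2 * pi \<noteq> 2 * pi"
      by (auto simp: eventually_at_filter)
    show "((\<lambda>x. x + 2 * pi) \<longlongrightarrow> 2 * pi) (at_left 0)"
      using tendsto_add[OF tendsto_ident_at[of 0 "{..<0}"] tendsto_const[of "2*pi"]] by simp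
  qed
  have "((\<lambda>v. K j (v + 2 * pi)) \<longlongrightarrow> K j 0) (at_left 0)"
    using filterlim_compose[OF lim2pi[OF assms] sh] .
  hence "(K j \<longlongrightarrow> K j 0) (at_left 0)" using periodic[OF assms] by simp
  thus ?thesis unfolding isCont_def using lim0[OF assms] filterlim_split_at by blast
qed

lemma K_cont: assumes "j \<le> n" "-2*pi \<le> u" "u \<le> 2 * pi" shows "isCont (K j) u"
proof -
  have base: "isCont (K j) v" if "0 \<le> v" "v < 2 * pi" for v
    using K_cont0[OF assms(1)] K_cont_open[OF assms(1)] that by (cases "v = 0") auto
  have e1: "K j = (\<lambda>v. K j (v + 2 * pi))" using periodic[OF assms(1)] by auto
  have e2: "K j = (\<lambda>v. K j (v - 2 * pi))" using periodic[OF assms(1), of "_ - 2*pi"] by auto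
  show ?thesis
  proof (cases "u < 0")
    case True
    have "isCont (\<lambda>v. K j (v + 2 * pi)) u"
      by (rule isCont_o2[OF _ base]) (use True assms in \<open>auto intro!: continuous_intros\<close>)
    thus ?thesis using e1 by metis
  next
    case False
    show ?thesis
    proof (cases "u = 2 * pi")
      case True
      have "isCont (\<lambda>v. K j (v - 2 * pi)) u"
        by (rule isCont_o2[OF _ base]) (use True in \<open>auto intro!: continuous_intros\<close>)
      thus ?thesis using e2 by metis
    qed (use base False assms in auto)
  qed
qed

lemma K_ne_inf: assumes "j \<le> n" "-2*pi \<le> u" "u \<le> 2 * pi" shows "K j u \<noteq> \<infinity>"
proof -
  consider "u = -2*pi" | "u = 0" | "u = 2 * pi" | "-2*pi < u \<and> u < 2*pi \<and> u \<noteq> 0"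
    using assms by fastforce
  thus ?thesis
  proof cases
    case 1 thus ?thesis using periodic[OF assms(1), of "-2*pi"] not_pinf[OF assms(1)] by simp
  next
    case 2 thus ?thesis using not_pinf[OF assms(1)] by simp
  next
    case 3 thus ?thesis using periodic[OF assms(1), of 0] not_pinf[OF assms(1)] by simp
  next
    case 4 thus ?thesis using K_real[OF assms(1)] by auto
  qed
qed

end


lemma tendsto_sum_ereal':
  fixes f :: "'i \<Rightarrow> 'a \<Rightarrow> ereal"
  assumes "finite A" "\<And>i. i \<in> A \<Longrightarrow> (f i \<longlongrightarrow> l i) F" "\<And>i. i \<in> A \<Longrightarrow> l i \<noteq> \<infinity>"
  shows "((\<lambda>x. \<Sum>i\<in>A. f i x) \<longlongrightarrow> (\<Sum>i\<in>A. l i)) F"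
  using assms
proof (induction A rule: finite_induct)
  case empty thus ?case by simp
next
  case (insert a A)
  have s: "(\<Sum>i\<in>A. l i) \<noteq> \<infinity>" using insert sum_Pinfty[of l A] by auto
  have "((\<lambda>x. f a x + (\<Sum>i\<in>A. f i x)) \<longlongrightarrow> l a + (\<Sum>i\<in>A. l i)) F"
    by (rule tendsto_add_ereal_general) (use insert s in auto)
  thus ?case using insert by simp
qed

context kern begin

definition RF :: "(nat \<Rightarrow> real) \<Rightarrow> real \<Rightarrow> real" where
  "RF y t = (\<Sum>i\<in>{..n}. kr i (t - ext_pt n y i))"
definition RF' :: "(nat \<Rightarrow> real) \<Rightarrow> real \<Rightarrow> real" where
  "RF' y t = (\<Sum>i\<in>{..n}. d i (tau (t - ext_pt n y i)))"

lemma Fker_sum: "Fker n K y t = (\<Sum>i\<in>{..n}. K i (t - ext_pt n y i))"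
proof -
  have e: "{..n} = insert 0 {1..n}" by auto
  have "(\<Sum>i\<in>{..n}. K i (t - ext_pt n y i)) = K 0 t + (\<Sum>i\<in>{1..n}. K i (t - ext_pt n y i))"
    unfolding e by (subst sum.insert) (auto simp: ext_pt_def)
  also have "(\<Sum>i\<in>{1..n}. K i (t - ext_pt n y i)) = (\<Sum>i\<in>{1..n}. K i (t - y i))"
    by (rule sum.cong) (auto simp: ext_pt_def)
  finally show ?thesis by (simp add: Fker_def)
qed

lemma good:
  assumes perm: "\<sigma> permutes {1..n}" and yS: "y \<in> simplex_sigma n \<sigma>" and k: "k \<le> n"
    and t: "nd n \<sigma> y k < t" "t < nd n \<sigma> y (Suc k)" and i: "i \<le> n"
  shows "-2*pi < t - ext_pt n y i" "t - ext_pt n y i < 2*pi" "t - ext_pt n y i \<noteq> 0"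
    "0 < t - ext_pt n y i \<longleftrightarrow> ext_pt n y i \<le> nd n \<sigma> y k" "0 < t" "t < 2 * pi"
proof -
  have a: "0 \<le> nd n \<sigma> y k" using nd_mono_le[OF yS, of 0 k] nd_ends[OF perm] k by auto
  have b: "nd n \<sigma> y (Suc k) \<le> 2 * pi" using nd_mono_le[OF yS, of "Suc k" "Suc n"] nd_ends[OF perm] k by auto
  show "0 < t" "t < 2 * pi" using a b t by auto
  note e = ext_range[OF perm yS i]
  note s = node_side[OF perm yS i k]
  show "-2*pi < t - ext_pt n y i" "t - ext_pt n y i < 2*pi" using e a b t by auto
  show "t - ext_pt n y i \<noteq> 0" using s t by auto
  show "0 < t - ext_pt n y i \<longleftrightarrow> ext_pt n y i \<le> nd n \<sigma> y k" using s t by auto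
qed

lemma F_real:
  assumes perm: "\<sigma> permutes {1..n}" and yS: "y \<in> simplex_sigma n \<sigma>" and k: "k \<le> n"
    and t: "nd n \<sigma> y k < t" "t < nd n \<sigma> y (Suc k)"
  shows "Fker n K y t = ereal (RF y t)"
proof -
  have "Fker n K y t = (\<Sum>i\<in>{..n}. ereal (kr i (t - ext_pt n y i)))"
    unfolding Fker_sum
    by (rule sum.cong) (use good[OF assms] K_real in auto)
  thus ?thesis by (simp add: RF_def)
qed

lemma RF_der:
  assumes perm: "\<sigma> permutes {1..n}" and yS: "y \<in> simplex_sigma n \<sigma>" and k: "k \<le> n"
    and t: "nd n \<sigma> y k < t" "t < nd n \<sigma> y (Suc k)"
  shows "(RF y has_real_derivative RF' y t) (at t)"
proof -
  have "((\<lambda>x. \<Sum>i\<in>{..n}. kr i (x - ext_pt n y i)) has_real_derivative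
          (\<Sum>i\<in>{..n}. d i (tau (t - ext_pt n y i)))) (at t)"
  proof (rule DERIV_sum)
    fix i assume i: "i \<in> {..n}"
    have "((\<lambda>x. x - ext_pt n y i) has_real_derivative 1) (at t)"
      by (auto intro!: derivative_eq_intros)
    from DERIV_chain2[OF kr_der this] good[OF assms, of i] i
    show "((\<lambda>x. kr i (x - ext_pt n y i)) has_real_derivative d i (tau (t - ext_pt n y i))) (at t)"
      by auto
  qed
  thus ?thesis unfolding RF_def[abs_def] RF'_def by simp
qed

lemma RF'_strict:
  assumes perm: "\<sigma> permutes {1..n}" and yS: "y \<in> simplex_sigma n \<sigma>" and k: "k \<le> n"
    and t: "nd n \<sigma> y k < t1" "t1 < t2" "t2 < nd n \<sigma> y (Suc k)"
  shows "RF' y t2 < RF' y t1"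
  unfolding RF'_def
proof (rule sum_strict_mono)
  fix i assume i: "i \<in> {..n}"
  note g1 = good[OF perm yS k, of t1 i] and g2 = good[OF perm yS k, of t2 i]
  show "d i (tau (t2 - ext_pt n y i)) < d i (tau (t1 - ext_pt n y i))"
  proof (cases "ext_pt n y i \<le> nd n \<sigma> y k")
    case True
    thus ?thesis using g1 g2 t i d_strict[of i "t1 - ext_pt n y i" "t2 - ext_pt n y i"]
      by (auto simp: tau_def)
  next
    case False
    thus ?thesis using g1 g2 t i d_strict[of i "t1 - ext_pt n y i + 2*pi" "t2 - ext_pt n y i + 2*pi"]
      by (auto simp: tau_def)
  qed
qed auto

lemma F_cont:
  assumes perm: "\<sigma> permutes {1..n}" and yS: "y \<in> simplex_sigma n \<sigma>" and t: "0 \<le> t" "t \<le> 2 * pi"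
  shows "isCont (Fker n K y) t" "Fker n K y t \<noteq> \<infinity>"
proof -
  have fe: "Fker n K y = (\<lambda>t. \<Sum>i\<in>{..n}. K i (t - ext_pt n y i))" using Fker_sum by auto
  have ci: "isCont (\<lambda>t. K i (t - ext_pt n y i)) t" if "i \<le> n" for i
    by (rule isCont_o2[OF _ K_cont]) (use ext_range[OF perm yS that] t that in \<open>auto intro!: continuous_intros\<close>)
  have ni: "K i (t - ext_pt n y i) \<noteq> \<infinity>" if "i \<le> n" for i
    using K_ne_inf[OF that] ext_range[OF perm yS that] t by auto
  show "isCont (Fker n K y) t" unfolding fe isCont_def
    by (rule tendsto_sum_ereal') (use ci ni in \<open>auto simp: isCont_def\<close>)
  show "Fker n K y t \<noteq> \<infinity>" unfolding Fker_sum sum_Pinfty using ni by auto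
qed

end


context kern begin

lemma F_fin_closed:
  assumes perm: "\<sigma> permutes {1..n}" and yS: "y \<in> simplex_sigma n \<sigma>" and k: "k \<le> n"
    and t: "nd n \<sigma> y k \<le> t" "t \<le> nd n \<sigma> y (Suc k)"
  shows "0 \<le> t" "t \<le> 2 * pi" "Fker n K y t \<noteq> \<infinity>"
proof -
  have a: "0 \<le> nd n \<sigma> y k" using nd_mono_le[OF yS, of 0 k] nd_ends[OF perm] k by auto
  have b: "nd n \<sigma> y (Suc k) \<le> 2 * pi" using nd_mono_le[OF yS, of "Suc k" "Suc n"] nd_ends[OF perm] k by auto
  show "0 \<le> t" "t \<le> 2 * pi" using a b t by auto
  thus "Fker n K y t \<noteq> \<infinity>" using F_cont[OF perm yS] by auto
qed

lemma CONC:
  assumes perm: "\<sigma> permutes {1..n}" and yS: "y \<in> simplex_sigma n \<sigma>" and k: "k \<le> n"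
    and pqr: "nd n \<sigma> y k \<le> p" "p < q" "q < r" "r \<le> nd n \<sigma> y (Suc k)"
    and fp: "Fker n K y p \<noteq> -\<infinity>" and fr: "Fker n K y r \<noteq> -\<infinity>"
  shows "(real_of_ereal (Fker n K y r) - real_of_ereal (Fker n K y q)) / (r - q)
       < (real_of_ereal (Fker n K y q) - real_of_ereal (Fker n K y p)) / (q - p)"
proof -
  let ?F = "Fker n K y" let ?g = "\<lambda>t. real_of_ereal (Fker n K y t)"
  have fin: "?F t \<noteq> \<infinity> \<and> ?F t \<noteq> -\<infinity>" if "p \<le> t" "t \<le> r" for t
  proof -
    have "?F t \<noteq> \<infinity>" using F_fin_closed[OF perm yS k, of t] that pqr by auto
    moreover have "?F t \<noteq> -\<infinity>"
    proof (cases "t = p \<or> t = r")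
      case True thus ?thesis using fp fr by auto
    next
      case False thus ?thesis using F_real[OF perm yS k, of t] that pqr by auto
    qed
    ultimately show ?thesis by auto
  qed
  have cF: "continuous_on {p..r} ?F"
    by (rule continuous_at_imp_continuous_on) (use F_cont[OF perm yS] F_fin_closed[OF perm yS k] pqr in auto)
  have cg: "continuous_on {p..r} ?g"
    by (rule continuous_on_compose2[OF continuous_on_real cF]) (use fin in auto)
  have dg: "(?g has_real_derivative RF' y x) (at x)" if "p < x" "x < r" for x
  proof (rule has_field_derivative_transform_within_open[of "RF y" _ _ "{nd n \<sigma> y k<..<nd n \<sigma> y (Suc k)}"])
    show "(RF y has_real_derivative RF' y x) (at x)" using RF_der[OF perm yS k] that pqr by auto
  qed (use that pqr F_real[OF perm yS k] in auto)
  have cg1: "continuous_on {p..q} ?g" "continuous_on {q..r} ?g" using cg pqr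
    by (auto intro: continuous_on_subset)
  obtain l1 x1 where x1: "p < x1" "x1 < q" "(?g has_real_derivative l1) (at x1)" "?g q - ?g p = (q - p) * l1"
    using MVT[OF pqr(2) cg1(1)] dg pqr by (meson order.strict_trans real_differentiable_def)
  obtain l2 x2 where x2: "q < x2" "x2 < r" "(?g has_real_derivative l2) (at x2)" "?g r - ?g q = (r - q) * l2"
    using MVT[OF pqr(3) cg1(2)] dg pqr by (meson order.strict_trans real_differentiable_def)
  have "l1 = RF' y x1" using DERIV_unique[OF x1(3) dg[of x1]] x1 pqr by auto
  moreover have "l2 = RF' y x2" using DERIV_unique[OF x2(3) dg[of x2]] x2 pqr by auto
  moreover have "RF' y x2 < RF' y x1" using RF'_strict[OF perm yS k, of x1 x2] x1 x2 pqr by auto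
  ultimately show ?thesis using x1(4) x2(4) pqr by auto
qed

lemma max_unique:
  assumes perm: "\<sigma> permutes {1..n}" and yS: "y \<in> simplex_sigma n \<sigma>" and k: "k \<le> n"
  shows "\<exists>!t. t \<in> Iint n \<sigma> y k \<and> Fker n K y t = Sup (Fker n K y ` Iint n \<sigma> y k)"
proof -
  let ?F = "Fker n K y" let ?A = "Iint n \<sigma> y k"
  let ?a = "nd n \<sigma> y k" let ?b = "nd n \<sigma> y (Suc k)"
  have ab: "?a < ?b" using nd_step[OF yS k] .
  have A: "?A = {?a..?b}" by (simp add: Iint_nd)
  have cF: "continuous_on ?A ?F" unfolding A
    by (rule continuous_at_imp_continuous_on) (use F_cont[OF perm yS] F_fin_closed[OF perm yS k] in auto)
  obtain x where x: "x \<in> ?A" "\<forall>t\<in>?A. ?F t \<le> ?F x"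
    using continuous_attains_sup[OF _ _ cF] A ab by auto
  have sx: "Sup (?F ` ?A) = ?F x"
    by (rule antisym) (use x in \<open>auto intro: SUP_least SUP_upper\<close>)
  have nomax: False if t12: "t1 \<in> ?A" "t2 \<in> ?A" "t1 < t2" "?F t1 = ?F x" "?F t2 = ?F x" for t1 t2
  proof -
    let ?m = "(t1 + t2) / 2"
    have mi: "?a < ?m" "?m < ?b" using t12 A by auto
    have fm: "?F ?m = ereal (RF y ?m)" using F_real[OF perm yS k] mi by auto
    have "?m \<in> ?A" using mi A by auto
    hence "?F ?m \<le> ?F x" using x by auto
    hence ninf: "?F x \<noteq> -\<infinity>" using fm by auto
    have "(real_of_ereal (?F t2) - real_of_ereal (?F ?m)) / (t2 - ?m)
       < (real_of_ereal (?F ?m) - real_of_ereal (?F t1)) / (?m - t1)"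
      by (rule CONC[OF perm yS k]) (use t12 A ninf in auto)
    moreover have "t2 - ?m = ?m - t1" by (simp add: field_simps)
    ultimately have ineq: "(real_of_ereal (?F x) - RF y ?m) / (?m - t1) < (RF y ?m - real_of_ereal (?F x)) / (?m - t1)"
      using t12 fm by simp
    have h: "?m - t1 > 0" using t12 by simp
    have "real_of_ereal (?F x) - RF y ?m < RF y ?m - real_of_ereal (?F x)"
    proof (rule ccontr)
      assume "\<not> ?thesis"
      hence "(RF y ?m - real_of_ereal (?F x)) / (?m - t1) \<le> (real_of_ereal (?F x) - RF y ?m) / (?m - t1)"
        using h by (intro divide_right_mono) auto
      thus False using ineq by auto
    qed
    hence "real_of_ereal (?F x) < RF y ?m" by simp
    moreover have "?F x \<noteq> \<infinity>" using F_fin_closed[OF perm yS k, of x] x A by auto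
    ultimately have "?F x < ?F ?m" using fm ninf by (cases "?F x") auto
    thus False using \<open>?F ?m \<le> ?F x\<close> by auto
  qed
  show ?thesis
  proof (rule ex1I[of _ x])
    show "x \<in> ?A \<and> ?F x = Sup (?F ` ?A)" using x sx by auto
    fix t assume t: "t \<in> ?A \<and> ?F t = Sup (?F ` ?A)"
    show "t = x"
    proof (rule ccontr)
      assume "t \<noteq> x"
      hence "t < x \<or> x < t" by auto
      thus False using nomax[of t x] nomax[of x t] t x sx by auto
    qed
  qed
qed

lemma zprop:
  assumes perm: "\<sigma> permutes {1..n}" and yS: "y \<in> simplex_sigma n \<sigma>" and k: "k \<le> n"
  defines "z \<equiv> zval n K \<sigma> y k"
  shows "z \<in> Iint n \<sigma> y k" "Fker n K y z = Sup (Fker n K y ` Iint n \<sigma> y k)"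
    "\<And>t. t \<in> Iint n \<sigma> y k \<Longrightarrow> t \<noteq> z \<Longrightarrow> Fker n K y t < Fker n K y z"
    "mval n K \<sigma> y k = real_of_ereal (Fker n K y z)"
proof -
  note th = theI'[OF max_unique[OF perm yS k]]
  show z1: "z \<in> Iint n \<sigma> y k" and z2: "Fker n K y z = Sup (Fker n K y ` Iint n \<sigma> y k)"
    using th unfolding z_def zval_def by auto
  show "mval n K \<sigma> y k = real_of_ereal (Fker n K y z)" using z2 by (simp add: mval_def)
  fix t assume t: "t \<in> Iint n \<sigma> y k" "t \<noteq> z"
  have "Fker n K y t \<le> Fker n K y z" using z2 t by (auto intro: SUP_upper)
  moreover have "Fker n K y t \<noteq> Fker n K y z"
    using max_unique[OF perm yS k] z1 z2 t by auto
  ultimately show "Fker n K y t < Fker n K y z" by auto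
qed

end





lemma ext_upd: "j \<in> {1..n} \<Longrightarrow> ext_pt n (y(j:=s)) i = (if i = j then s else ext_pt n y i)"
  by (auto simp: ext_pt_def)

lemma nd_upd_close:
  assumes "j \<in> {1..n}"
  shows "\<bar>nd n \<sigma> (y(j:=s)) m - nd n \<sigma> y m\<bar> \<le> \<bar>s - y j\<bar>"
proof -
  have "ext_pt n y j = y j" using assms by (auto simp: ext_pt_def)
  thus ?thesis unfolding nd_def using ext_upd[OF assms] by auto
qed

lemma simplex_upd:
  assumes perm: "\<sigma> permutes {1..n}" and yS: "y \<in> simplex_sigma n \<sigma>" and j: "j \<in> {1..n}"
  shows "\<exists>g>0. \<forall>s. \<bar>s - y j\<bar> < g \<longrightarrow> y(j:=s) \<in> simplex_sigma n \<sigma>"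
proof -
  define G where "G = Min ((\<lambda>m. nd n \<sigma> y (Suc m) - nd n \<sigma> y m) ` {..n})"
  have Gp: "G > 0" unfolding G_def using nd_step[OF yS] by (subst Min_gr_iff) auto
  have Gle: "G \<le> nd n \<sigma> y (Suc m) - nd n \<sigma> y m" if "m \<le> n" for m
    unfolding G_def using that by (intro Min_le) auto
  show ?thesis
  proof (intro exI[of _ "G/2"] conjI allI impI)
    show "G/2 > 0" using Gp by simp
    fix s assume s: "\<bar>s - y j\<bar> < G/2"
    show "y(j:=s) \<in> simplex_sigma n \<sigma>" unfolding simplex_sigma_def
    proof (intro CollectI allI impI)
      fix m assume m: "m \<le> n"
      have "nd n \<sigma> (y(j:=s)) m < nd n \<sigma> (y(j:=s)) (Suc m)"
        using nd_upd_close[OF j, of \<sigma> y s m] nd_upd_close[OF j, of \<sigma> y s "Suc m"] Gle[OF m] s by linarith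
      thus "ext_pt n (y(j := s)) (\<sigma> m) < ext_pt n (y(j := s)) (\<sigma> (Suc m))" by (simp add: nd_def)
    qed
  qed
qed

lemma mvt_est0:
  fixes f f' :: "real \<Rightarrow> real"
  assumes der: "\<And>\<xi>. \<bar>\<xi> - c\<bar> < \<rho> \<Longrightarrow> (f has_real_derivative f' \<xi>) (at \<xi>) \<and> \<bar>f' \<xi> - D\<bar> < \<eta>"
    and u: "\<bar>u - c\<bar> < \<rho>" and v: "\<bar>v - c\<bar> < \<rho>" and uv: "u < v"
  shows "\<bar>f v - f u - (v - u) * D\<bar> \<le> \<eta> * \<bar>v - u\<bar>"
proof -
  have inr: "\<bar>x - c\<bar> < \<rho>" if "u \<le> x" "x \<le> v" for x using u v that by auto
  have cont: "continuous_on {u..v} f"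
  proof (rule continuous_at_imp_continuous_on, intro ballI)
    fix x assume "x \<in> {u..v}"
    thus "isCont f x" using der[of x] inr[of x] DERIV_isCont by auto
  qed
  have dif: "f differentiable (at x)" if "u < x" "x < v" for x
  proof -
    have "(f has_real_derivative f' x) (at x)" using der[of x] inr[of x] that by auto
    thus ?thesis using real_differentiable_def by blast
  qed
  obtain l \<xi> where x: "u < \<xi>" "\<xi> < v" "(f has_real_derivative l) (at \<xi>)" "f v - f u = (v - u) * l"
    using MVT[OF uv cont dif] by blast
  have dx: "(f has_real_derivative f' \<xi>) (at \<xi>) \<and> \<bar>f' \<xi> - D\<bar> < \<eta>" using der[of \<xi>] inr[of \<xi>] x by auto
  have "l = f' \<xi>" using DERIV_unique[OF x(3)] dx by auto
  hence "\<bar>l - D\<bar> < \<eta>" using dx by auto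
  have e: "f v - f u - (v - u) * D = (v - u) * (l - D)" using x(4) by (simp add: algebra_simps)
  have "\<bar>f v - f u - (v - u) * D\<bar> = (v - u) * \<bar>l - D\<bar>" unfolding e abs_mult using uv by simp
  also have "\<dots> \<le> (v - u) * \<eta>" using \<open>\<bar>l - D\<bar> < \<eta>\<close> uv by (intro mult_left_mono) auto
  finally show ?thesis using uv by (simp add: mult.commute[of \<eta>])
qed

lemma mvt_est:
  fixes f f' :: "real \<Rightarrow> real"
  assumes der: "\<And>\<xi>. \<bar>\<xi> - c\<bar> < \<rho> \<Longrightarrow> (f has_real_derivative f' \<xi>) (at \<xi>) \<and> \<bar>f' \<xi> - D\<bar> < \<eta>"
    and u: "\<bar>u - c\<bar> < \<rho>" and v: "\<bar>v - c\<bar> < \<rho>"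
  shows "\<bar>f v - f u - (v - u) * D\<bar> \<le> \<eta> * \<bar>v - u\<bar>"
proof -
  consider "u < v" | "u = v" | "v < u" by linarith
  thus ?thesis
  proof cases
    case 1 thus ?thesis using mvt_est0[OF der u v] by blast
  next
    case 2 thus ?thesis by simp
  next
    case 3
    have "\<bar>f u - f v - (u - v) * D\<bar> \<le> \<eta> * \<bar>u - v\<bar>" using mvt_est0[OF der v u 3] by blast
    moreover have "f u - f v - (u - v) * D = - (f v - f u - (v - u) * D)" by (simp add: algebra_simps)
    moreover have "\<bar>u - v\<bar> = \<bar>v - u\<bar>" by (rule abs_minus_commute)
    ultimately show ?thesis by (metis abs_minus_cancel)
  qed
qed

context kern begin

lemma RF_upd:
  assumes j: "j \<in> {1..n}"
  shows "RF (y(j:=s)) t = RF y t - kr j (t - y j) + kr j (t - s)"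
proof -
  have jn: "j \<in> {..n}" using j by auto
  have ej: "ext_pt n y j = y j" using j by (auto simp: ext_pt_def)
  have rest: "(\<Sum>i\<in>{..n} - {j}. kr i (t - ext_pt n (y(j:=s)) i)) = (\<Sum>i\<in>{..n} - {j}. kr i (t - ext_pt n y i))"
    by (rule sum.cong) (auto simp: ext_upd[OF j])
  show ?thesis unfolding RF_def
    using sum.remove[OF _ jn, of "\<lambda>i. kr i (t - ext_pt n (y(j:=s)) i)"]
      sum.remove[OF _ jn, of "\<lambda>i. kr i (t - ext_pt n y i)"] rest ej ext_upd[OF j]
    by simp
qed

end




context kern begin

lemma AL:
  assumes perm: "\<sigma> permutes {1..n}" and yS: "y \<in> simplex_sigma n \<sigma>" and k: "k \<le> n"
    and j: "j \<in> {1..n}"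
    and zi: "nd n \<sigma> y k < zval n K \<sigma> y k" "zval n K \<sigma> y k < nd n \<sigma> y (Suc k)"
  shows "((\<lambda>s. mval n K \<sigma> (y(j:=s)) k) has_real_derivative
            - d j (tau (zval n K \<sigma> y k - y j))) (at (y j))"
proof -
  define z where "z = zval n K \<sigma> y k"
  define s0 where "s0 = y j"
  define c where "c = z - s0"
  define D where "D = d j (tau c)"
  define M where "M = RF y z"
  define a where "a = nd n \<sigma> y k"
  define b where "b = nd n \<sigma> y (Suc k)"
  have za: "a < z" "z < b" using zi unfolding z_def a_def b_def by auto
  have jn: "j \<le> n" using j by auto
  have ej: "ext_pt n y j = s0" using j by (auto simp: ext_pt_def s0_def)
  have gc: "-2*pi < c" "c < 2*pi" "c \<noteq> 0"
    using good[OF perm yS k, of z j] za jn ej unfolding c_def a_def b_def by auto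
  have FzM: "Fker n K y z = ereal M" using F_real[OF perm yS k, of z] za unfolding M_def a_def b_def by auto
  have mM: "mval n K \<sigma> y k = M" using zprop(4)[OF perm yS k] FzM unfolding z_def by simp
  have Fle: "Fker n K y t \<le> ereal M" if "t \<in> Iint n \<sigma> y k" for t
    using zprop(2)[OF perm yS k] that FzM unfolding z_def by (metis SUP_upper)
  have Flt: "Fker n K y t < ereal M" if "t \<in> Iint n \<sigma> y k" "t \<noteq> z" for t
    using zprop(3)[OF perm yS k] that FzM unfolding z_def by metis
  obtain g0 where g0: "g0 > 0" "\<And>s. \<bar>s - s0\<bar> < g0 \<Longrightarrow> y(j:=s) \<in> simplex_sigma n \<sigma>"
    using simplex_upd[OF perm yS j] unfolding s0_def by blast
  have ndc: "\<bar>nd n \<sigma> (y(j:=s)) m - nd n \<sigma> y m\<bar> \<le> \<bar>s - s0\<bar>" for s m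
    using nd_upd_close[OF j] unfolding s0_def by blast
  have key: "\<exists>\<delta>>0. \<forall>s. \<bar>s - s0\<bar> < \<delta> \<longrightarrow>
      \<bar>mval n K \<sigma> (y(j:=s)) k - M + (s - s0) * D\<bar> \<le> \<eta> * \<bar>s - s0\<bar>" if \<eta>: "\<eta> > 0" for \<eta>
  proof -
    have "isCont (d j) (tau c)" using d_cont[OF jn] tau_range[OF gc] by auto
    then obtain \<rho>1 where \<rho>0: "\<rho>1 > 0" "\<forall>x. x \<noteq> tau c \<and> norm (x - tau c) < \<rho>1 \<longrightarrow> norm (d j x - D) < \<eta>"
      unfolding isCont_def D_def using LIM_D[OF _ \<eta>] by blast
    have \<rho>1: "\<rho>1 > 0" "\<And>x. \<bar>x - tau c\<bar> < \<rho>1 \<Longrightarrow> \<bar>d j x - D\<bar> < \<eta>"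
    proof -
      show "\<rho>1 > 0" by (rule \<rho>0(1))
      fix x assume x: "\<bar>x - tau c\<bar> < \<rho>1"
      show "\<bar>d j x - D\<bar> < \<eta>"
      proof (cases "x = tau c")
        case True thus ?thesis using \<eta> unfolding D_def by simp
      next
        case False thus ?thesis using \<rho>0(2) x by auto
      qed
    qed
    define \<rho> where "\<rho> = min \<rho>1 (min \<bar>c\<bar> (2*pi - \<bar>c\<bar>))"
    have \<rho>p: "\<rho> > 0" using \<rho>1 gc by (auto simp: \<rho>_def)
    have d\<xi>: "(kr j has_real_derivative d j (tau \<xi>)) (at \<xi>) \<and> \<bar>d j (tau \<xi>) - D\<bar> < \<eta>"
      if "\<bar>\<xi> - c\<bar> < \<rho>" for \<xi>
    proof
      have q: "\<bar>\<xi> - c\<bar> < \<bar>c\<bar>" "\<bar>\<xi> - c\<bar> < 2*pi - \<bar>c\<bar>" using that by (auto simp: \<rho>_def)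
      have r: "-2*pi < \<xi>" "\<xi> < 2*pi" "\<xi> \<noteq> 0" "0 < \<xi> \<longleftrightarrow> 0 < c"
      proof -
        have "(0 < c \<and> 0 < \<xi> \<and> \<xi> < 2*pi) \<or> (c < 0 \<and> \<xi> < 0 \<and> -2*pi < \<xi>)"
        proof (cases "0 < c")
          case True thus ?thesis using q unfolding abs_less_iff by auto
        next
          case False hence "c < 0" using gc by auto
          thus ?thesis using q unfolding abs_less_iff by auto
        qed
        thus "-2*pi < \<xi>" "\<xi> < 2*pi" "\<xi> \<noteq> 0" "0 < \<xi> \<longleftrightarrow> 0 < c" by auto
      qed
      show "(kr j has_real_derivative d j (tau \<xi>)) (at \<xi>)" using kr_der[OF jn r(1-3)] .
      have "\<bar>tau \<xi> - tau c\<bar> < \<rho>1" using that r(4) by (auto simp: tau_def \<rho>_def)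
      thus "\<bar>d j (tau \<xi>) - D\<bar> < \<eta>" using \<rho>1(2) by blast
    qed
    define \<epsilon> where "\<epsilon> = min (\<rho>/4) (min ((z - a)/4) ((b - z)/4))"
    have \<epsilon>p: "\<epsilon> > 0" "\<epsilon> \<le> \<rho>/4" "\<epsilon> \<le> (z - a)/4" "\<epsilon> \<le> (b - z)/4"
      unfolding \<epsilon>_def using \<rho>p za by (simp, meson min.cobounded1 min.cobounded2 order_trans,
         meson min.cobounded1 min.cobounded2 order_trans, meson min.cobounded1 min.cobounded2 order_trans)
    have Iy: "t \<in> Iint n \<sigma> y k" if "\<bar>t - z\<bar> \<le> \<epsilon>" for t
      using that \<epsilon>p za by (auto simp: Iint_nd a_def b_def abs_le_iff)
    have RFy: "Fker n K y t = ereal (RF y t)" if "\<bar>t - z\<bar> \<le> \<epsilon>" for t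
      using F_real[OF perm yS k, of t] that \<epsilon>p za by (auto simp: a_def b_def abs_le_iff)
    have RFle: "RF y t \<le> M" if "\<bar>t - z\<bar> \<le> \<epsilon>" for t
      using Fle[OF Iy[OF that]] RFy[OF that] by simp
    have RFlt: "RF y (z - \<epsilon>) < M" "RF y (z + \<epsilon>) < M"
      using Flt[OF Iy, of "z - \<epsilon>"] Flt[OF Iy, of "z + \<epsilon>"] RFy[of "z - \<epsilon>"] RFy[of "z + \<epsilon>"] \<epsilon>p by auto
    define \<Delta> where "\<Delta> = min (M - RF y (z - \<epsilon>)) (M - RF y (z + \<epsilon>))"
    have \<Delta>p: "\<Delta> > 0" "RF y (z - \<epsilon>) \<le> M - \<Delta>" "RF y (z + \<epsilon>) \<le> M - \<Delta>"
      using RFlt by (auto simp: \<Delta>_def)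
    have Dh: "\<bar>D\<bar> + \<eta> > 0" using \<eta> by auto
    define \<delta> where "\<delta> = min (min \<epsilon> g0) (min (\<rho>/2) (\<Delta> / (2*(\<bar>D\<bar> + \<eta>))))"
    have \<delta>p: "\<delta> > 0" "\<delta> \<le> \<epsilon>" "\<delta> \<le> g0" "\<delta> \<le> \<rho>/2" "\<delta> \<le> \<Delta> / (2*(\<bar>D\<bar> + \<eta>))"
      unfolding \<delta>_def using \<epsilon>p g0 \<rho>p \<Delta>p Dh
      by (simp, (meson min.cobounded1 min.cobounded2 order_trans)+)
    show ?thesis
    proof (intro exI[of _ \<delta>] conjI allI impI)
      show "\<delta> > 0" by (rule \<delta>p)
      fix s assume s: "\<bar>s - s0\<bar> < \<delta>"
      define ys where "ys = y(j:=s)"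
      have ysS: "ys \<in> simplex_sigma n \<sigma>" using g0(2)[of s] s \<delta>p unfolding ys_def by auto
      have EST: "\<bar>kr j (t - s) - kr j (t - s0) + (s - s0) * D\<bar> \<le> \<eta> * \<bar>s - s0\<bar>"
        if "\<bar>t - z\<bar> \<le> \<epsilon>" for t
      proof -
        have u: "\<bar>(t - s0) - c\<bar> < \<rho>" using that \<epsilon>p \<rho>p unfolding c_def by auto
        have v: "\<bar>(t - s) - c\<bar> < \<rho>" using that \<epsilon>p \<rho>p s \<delta>p unfolding c_def by (auto simp: abs_le_iff abs_less_iff)
        have m: "\<bar>kr j (t - s) - kr j (t - s0) - ((t - s) - (t - s0)) * D\<bar> \<le> \<eta> * \<bar>(t - s) - (t - s0)\<bar>"
          by (rule mvt_est[OF d\<xi> u v])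
        have e1: "kr j (t - s) - kr j (t - s0) - ((t - s) - (t - s0)) * D = kr j (t - s) - kr j (t - s0) + (s - s0) * D"
          by (simp add: algebra_simps)
        have e2: "\<bar>(t - s) - (t - s0)\<bar> = \<bar>s - s0\<bar>" using abs_minus_commute[of s0 s] by simp
        show ?thesis using m unfolding e1 e2 .
      qed
      have bnd: "\<bar>kr j (t - s) - kr j (t - s0)\<bar> \<le> (\<bar>D\<bar> + \<eta>) * \<bar>s - s0\<bar>" if "\<bar>t - z\<bar> \<le> \<epsilon>" for t
      proof -
        have "\<bar>(s - s0) * D\<bar> = \<bar>D\<bar> * \<bar>s - s0\<bar>" by (simp add: abs_mult)
        thus ?thesis using EST[OF that] by (simp add: algebra_simps)
      qed
      have small: "(\<bar>D\<bar> + \<eta>) * \<bar>s - s0\<bar> < \<Delta> / 2"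
      proof -
        have "(\<bar>D\<bar> + \<eta>) * \<bar>s - s0\<bar> < (\<bar>D\<bar> + \<eta>) * \<delta>" using s Dh by simp
        also have "\<dots> \<le> (\<bar>D\<bar> + \<eta>) * (\<Delta> / (2*(\<bar>D\<bar> + \<eta>)))" using \<delta>p Dh by (intro mult_left_mono) auto
        also have "\<dots> = \<Delta> / 2" using Dh by (simp add: field_simps)
        finally show ?thesis .
      qed
      have RFys: "RF ys t = RF y t - kr j (t - s0) + kr j (t - s)" for t
        unfolding ys_def s0_def by (rule RF_upd[OF j])
      have nda: "\<bar>nd n \<sigma> ys k - a\<bar> < \<epsilon>" "\<bar>nd n \<sigma> ys (Suc k) - b\<bar> < \<epsilon>"
        using ndc[of s k] ndc[of s "Suc k"] s \<delta>p unfolding ys_def a_def b_def by auto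
      have inner: "Fker n K ys t = ereal (RF ys t)" if "\<bar>t - z\<bar> \<le> \<epsilon>" for t
        by (rule F_real[OF perm ysS k]) (use that nda \<epsilon>p in \<open>auto simp: abs_le_iff abs_less_iff\<close>)
      define U where "U = M - (s - s0) * D + \<eta> * \<bar>s - s0\<bar>"
      have innerU: "Fker n K ys t \<le> ereal U" if "\<bar>t - z\<bar> \<le> \<epsilon>" for t
      proof -
        have "RF ys t \<le> U" using RFys[of t] RFle[OF that] EST[OF that] unfolding U_def by linarith
        thus ?thesis using inner[OF that] by simp
      qed
      have zz: "\<bar>z - z\<bar> \<le> \<epsilon>" "\<bar>(z + \<epsilon>) - z\<bar> \<le> \<epsilon>" "\<bar>(z - \<epsilon>) - z\<bar> \<le> \<epsilon>" using \<epsilon>p by auto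
      have RFysz: "RF ys z > M - \<Delta>/2" using RFys[of z] bnd[OF zz(1)] small M_def by linarith
      have RFysp: "RF ys (z + \<epsilon>) < RF ys z" using RFys[of "z + \<epsilon>"] bnd[OF zz(2)] small \<Delta>p RFysz by linarith
      have RFysm: "RF ys (z - \<epsilon>) < RF ys z" using RFys[of "z - \<epsilon>"] bnd[OF zz(3)] small \<Delta>p RFysz by linarith
      have allU: "Fker n K ys t \<le> ereal U" if t: "t \<in> Iint n \<sigma> ys k" for t
      proof -
        have tI: "nd n \<sigma> ys k \<le> t" "t \<le> nd n \<sigma> ys (Suc k)" using t by (auto simp: Iint_nd)
        consider "\<bar>t - z\<bar> \<le> \<epsilon>" | "z + \<epsilon> < t" | "t < z - \<epsilon>" by linarith
        thus ?thesis
        proof cases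
          case 1 thus ?thesis by (rule innerU)
        next
          case 2
          show ?thesis
          proof (cases "Fker n K ys t = -\<infinity>")
            case False
            have "(real_of_ereal (Fker n K ys t) - real_of_ereal (Fker n K ys (z + \<epsilon>))) / (t - (z + \<epsilon>))
                < (real_of_ereal (Fker n K ys (z + \<epsilon>)) - real_of_ereal (Fker n K ys z)) / ((z + \<epsilon>) - z)"
              by (rule CONC[OF perm ysS k]) (use 2 tI nda \<epsilon>p False inner[OF zz(1)] in \<open>auto simp: abs_less_iff\<close>)
            hence "(real_of_ereal (Fker n K ys t) - RF ys (z + \<epsilon>)) / (t - (z + \<epsilon>))
                < (RF ys (z + \<epsilon>) - RF ys z) / \<epsilon>"
              using inner[OF zz(1)] inner[OF zz(2)] by simp
            moreover have "(RF ys (z + \<epsilon>) - RF ys z) / \<epsilon> < 0"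
              by (rule divide_neg_pos) (use RFysp \<epsilon>p in auto)
            ultimately have "(real_of_ereal (Fker n K ys t) - RF ys (z + \<epsilon>)) / (t - (z + \<epsilon>)) < 0"
              by linarith
            hence lt: "real_of_ereal (Fker n K ys t) < RF ys (z + \<epsilon>)" using 2
              by (simp add: divide_less_0_iff)
            have "Fker n K ys t \<noteq> \<infinity>" using F_fin_closed[OF perm ysS k tI] by auto
            hence "Fker n K ys t < Fker n K ys (z + \<epsilon>)" using lt False inner[OF zz(2)]
              by (cases "Fker n K ys t") auto
            thus ?thesis using innerU[OF zz(2)] by auto
          qed simp
        next
          case 3
          show ?thesis
          proof (cases "Fker n K ys t = -\<infinity>")
            case False
            have "(real_of_ereal (Fker n K ys z) - real_of_ereal (Fker n K ys (z - \<epsilon>))) / (z - (z - \<epsilon>))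
                < (real_of_ereal (Fker n K ys (z - \<epsilon>)) - real_of_ereal (Fker n K ys t)) / ((z - \<epsilon>) - t)"
              by (rule CONC[OF perm ysS k]) (use 3 tI nda \<epsilon>p False inner[OF zz(1)] in \<open>auto simp: abs_less_iff\<close>)
            moreover have "(real_of_ereal (Fker n K ys z) - real_of_ereal (Fker n K ys (z - \<epsilon>))) / (z - (z - \<epsilon>)) > 0"
              using inner[OF zz(1)] inner[OF zz(3)] RFysm \<epsilon>p by simp
            ultimately have "(RF ys (z - \<epsilon>) - real_of_ereal (Fker n K ys t)) / ((z - \<epsilon>) - t) > 0"
              using inner[OF zz(3)] by simp
            hence lt: "real_of_ereal (Fker n K ys t) < RF ys (z - \<epsilon>)" using 3
              by (simp add: zero_less_divide_iff)
            have "Fker n K ys t \<noteq> \<infinity>" using F_fin_closed[OF perm ysS k tI] by auto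
            hence "Fker n K ys t < Fker n K ys (z - \<epsilon>)" using lt False inner[OF zz(3)]
              by (cases "Fker n K ys t") auto
            thus ?thesis using innerU[OF zz(3)] by auto
          qed simp
        qed
      qed
      define L where "L = M - (s - s0) * D - \<eta> * \<bar>s - s0\<bar>"
      have SU: "Sup (Fker n K ys ` Iint n \<sigma> ys k) \<le> ereal U" by (rule SUP_least) (use allU in auto)
      have zI: "z \<in> Iint n \<sigma> ys k" using nda \<epsilon>p by (auto simp: Iint_nd abs_less_iff)
      have "ereal L \<le> Fker n K ys z"
      proof -
        have "L \<le> RF ys z" using RFys[of z] EST[OF zz(1)] unfolding L_def M_def by linarith
        thus ?thesis using inner[OF zz(1)] by simp
      qed
      also have "\<dots> \<le> Sup (Fker n K ys ` Iint n \<sigma> ys k)" using zI by (rule SUP_upper)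
      finally have SL: "ereal L \<le> Sup (Fker n K ys ` Iint n \<sigma> ys k)" .
      have mv: "mval n K \<sigma> ys k = real_of_ereal (Sup (Fker n K ys ` Iint n \<sigma> ys k))" by (simp add: mval_def)
      have "L \<le> mval n K \<sigma> ys k \<and> mval n K \<sigma> ys k \<le> U" unfolding mv using SU SL
        by (cases "Sup (Fker n K ys ` Iint n \<sigma> ys k)") auto
      thus "\<bar>mval n K \<sigma> (y(j:=s)) k - M + (s - s0) * D\<bar> \<le> \<eta> * \<bar>s - s0\<bar>"
        unfolding ys_def L_def U_def by (simp add: abs_le_iff)
    qed
  qed
  have yy: "y(j := s0) = y" unfolding s0_def by simp
  show ?thesis unfolding has_field_derivative_iff LIM_eq
  proof (intro allI impI)
    fix r :: real assume r: "r > 0"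
    obtain \<delta> where \<delta>: "\<delta> > 0" "\<And>s. \<bar>s - s0\<bar> < \<delta> \<Longrightarrow>
      \<bar>mval n K \<sigma> (y(j:=s)) k - M + (s - s0) * D\<bar> \<le> r/2 * \<bar>s - s0\<bar>"
      using key[of "r/2"] r by auto
    show "\<exists>sa>0. \<forall>x. x \<noteq> y j \<and> norm (x - y j) < sa \<longrightarrow>
        norm ((mval n K \<sigma> (y(j := x)) k - mval n K \<sigma> (y(j := y j)) k) / (x - y j) - - d j (tau (zval n K \<sigma> y k - y j))) < r"
    proof (intro exI[of _ \<delta>] conjI allI impI)
      show "\<delta> > 0" by (rule \<delta>(1))
      fix x assume x: "x \<noteq> y j \<and> norm (x - y j) < \<delta>"
      have h: "\<bar>x - s0\<bar> > 0" using x s0_def by auto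
      have e: "(mval n K \<sigma> (y(j := x)) k - M) / (x - s0) - - D
             = (mval n K \<sigma> (y(j := x)) k - M + (x - s0) * D) / (x - s0)"
        using h by (simp add: field_simps)
      have q: "\<bar>mval n K \<sigma> (y(j := x)) k - M + (x - s0) * D\<bar> \<le> r/2 * \<bar>x - s0\<bar>"
        using \<delta>(2)[of x] x unfolding s0_def by simp
      have "\<bar>mval n K \<sigma> (y(j := x)) k - M + (x - s0) * D\<bar> / \<bar>x - s0\<bar> \<le> r/2"
        by (subst pos_divide_le_eq[OF h]) (rule q)
      hence qq: "\<bar>(mval n K \<sigma> (y(j := x)) k - M + (x - s0) * D) / (x - s0)\<bar> \<le> r/2"
        by (simp add: abs_divide)
      have "\<bar>(mval n K \<sigma> (y(j := x)) k - M + (x - s0) * D) / (x - s0)\<bar>< r"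
        by (rule le_less_trans[OF qq]) (use r in simp)
      hence "\<bar>(mval n K \<sigma> (y(j := x)) k - M) / (x - s0) - - D\<bar> < r" unfolding e .
      thus "norm ((mval n K \<sigma> (y(j := x)) k - mval n K \<sigma> (y(j := y j)) k) / (x - y j) - - d j (tau (zval n K \<sigma> y k - y j))) < r"
        using yy mM unfolding s0_def D_def c_def z_def by simp
    qed
  qed
qed

end


lemma colsum_col:
  fixes J :: "real mat" and v :: "real vec"
  assumes J: "J \<in> carrier_mat n n" and v: "v \<in> carrier_vec n" and c: "c < n"
  shows "(transpose_mat J *\<^sub>v v) $ c = (\<Sum>r<n. J $$ (r, c) * v $ r)"
proof -
  have "(transpose_mat J *\<^sub>v v) $ c = col J c \<bullet> v" using J c by simp
  also have "\<dots> = (\<Sum>r\<in>{0..<n}. col J c $ r * v $ r)" using v by (simp add: scalar_prod_def)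
  also have "\<dots> = (\<Sum>r<n. J $$ (r, c) * v $ r)" using J c
    by (intro sum.cong) (auto simp: lessThan_atLeast0)
  finally show ?thesis .
qed

lemma diag_dom_det:
  fixes J :: "real mat"
  assumes J: "J \<in> carrier_mat n n"
    and p: "\<And>r0. r0 < n \<Longrightarrow> p r0 < n \<and> J $$ (r0, p r0) < 0 \<and> (\<forall>r<n. r \<noteq> r0 \<longrightarrow> J $$ (r, p r0) > 0)
               \<and> (\<Sum>r<n. J $$ (r, p r0)) < 0"
  shows "Determinant.det J \<noteq> 0"
proof
  assume "Determinant.det J = 0"
  hence "Determinant.det (transpose_mat J) = 0" using det_transpose[OF J] by simp
  then obtain v where v: "v \<in> carrier_vec n" "v \<noteq> 0\<^sub>v n" "transpose_mat J *\<^sub>v v = 0\<^sub>v n"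
    using det_0_iff_vec_prod_zero[of "transpose_mat J" n] J by auto
  obtain r1 where r1: "r1 < n" "v $ r1 \<noteq> 0"
    using v(1,2) by (metis carrier_vecD eq_vecI index_zero_vec(1) index_zero_vec(2))
  define V where "V = Max ((\<lambda>r. \<bar>v $ r\<bar>) ` {..<n})"
  have "V \<in> (\<lambda>r. \<bar>v $ r\<bar>) ` {..<n}" unfolding V_def using r1 by (intro Max_in) auto
  then obtain r0 where r0: "r0 < n" "\<bar>v $ r0\<bar> = V" by auto
  have Vmax: "\<bar>v $ r\<bar> \<le> V" if "r < n" for r unfolding V_def using that by (intro Max_ge) auto
  have Vp: "V > 0" using Vmax[OF r1(1)] r1(2) by auto
  define c where "c = p r0"
  note pc = p[OF r0(1), folded c_def]
  define a where "a = (\<lambda>r. J $$ (r, c))"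
  have S0: "(\<Sum>r<n. a r * v $ r) = 0"
    using colsum_col[OF J v(1), of c] v(3) pc unfolding a_def by auto
  have rm: "(\<Sum>r<n. f r) = f r0 + (\<Sum>r\<in>{..<n} - {r0}. f r)" for f :: "nat \<Rightarrow> real"
    using sum.remove[of "{..<n}" r0 f] r0 by auto
  have "a r0 * v $ r0 = - (\<Sum>r\<in>{..<n} - {r0}. a r * v $ r)" using S0 rm[of "\<lambda>r. a r * v $ r"] by linarith
  hence e: "\<bar>a r0 * v $ r0\<bar> = \<bar>\<Sum>r\<in>{..<n} - {r0}. a r * v $ r\<bar>" by (simp only: abs_minus_cancel)
  have "\<bar>a r0\<bar> * V = \<bar>\<Sum>r\<in>{..<n} - {r0}. a r * v $ r\<bar>" unfolding e[symmetric] abs_mult r0(2) ..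
  also have "\<dots> \<le> (\<Sum>r\<in>{..<n} - {r0}. \<bar>a r * v $ r\<bar>)" by (rule sum_abs)
  also have "\<dots> \<le> (\<Sum>r\<in>{..<n} - {r0}. a r * V)"
  proof (rule sum_mono)
    fix r assume r: "r \<in> {..<n} - {r0}"
    hence "a r > 0" using pc unfolding a_def by auto
    thus "\<bar>a r * v $ r\<bar> \<le> a r * V" using Vmax[of r] r by (simp add: abs_mult)
  qed
  also have "\<dots> = (\<Sum>r\<in>{..<n} - {r0}. a r) * V" by (simp add: sum_distrib_right)
  also have "(\<Sum>r\<in>{..<n} - {r0}. a r) = (\<Sum>r<n. a r) - a r0" using rm[of a] by simp
  finally have "\<bar>a r0\<bar> * V \<le> ((\<Sum>r<n. a r) - a r0) * V" .
  moreover have "\<bar>a r0\<bar> = - a r0" using pc unfolding a_def by simp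
  ultimately have "0 \<le> (\<Sum>r<n. a r) * V" by (simp add: algebra_simps)
  hence "0 \<le> (\<Sum>r<n. a r)" using Vp by (simp add: zero_le_mult_iff)
  thus False using pc unfolding a_def by simp
qed


theorem proposition9p2:
  fixes n :: nat and K :: "nat \<Rightarrow> real \<Rightarrow> ereal"
    and \<sigma> :: "nat \<Rightarrow> nat" and y :: "nat \<Rightarrow> real"
  assumes periodic: "\<And>j t. j \<le> n \<Longrightarrow> K j (t + 2 * pi) = K j t"
    and real_valued: "\<And>j t. j \<le> n \<Longrightarrow> t \<in> {0<..<2 * pi} \<Longrightarrow> K j t \<noteq> -\<infinity> \<and> K j t \<noteq> \<infinity>"
    and concave: "\<And>j. j \<le> n \<Longrightarrow> concave_on {0<..<2 * pi} (\<lambda>t. real_of_ereal (K j t))"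
    and not_pinf: "\<And>j. j \<le> n \<Longrightarrow> K j 0 \<noteq> \<infinity>"
    and lim0: "\<And>j. j \<le> n \<Longrightarrow> (K j \<longlongrightarrow> K j 0) (at_right 0)"
    and lim2pi: "\<And>j. j \<le> n \<Longrightarrow> (K j \<longlongrightarrow> K j 0) (at_left (2 * pi))"
    and C2: "\<And>j. j \<le> n \<Longrightarrow> C2_on {0<..<2 * pi} (\<lambda>t. real_of_ereal (K j t))"
    and neg2: "\<And>j t. j \<le> n \<Longrightarrow> t \<in> {0<..<2 * pi} \<Longrightarrow>
                  deriv (deriv (\<lambda>t. real_of_ereal (K j t))) t < 0"
    and perm: "\<sigma> permutes {1..n}"
    and yS: "y \<in> simplex_sigma n \<sigma>"
    and z_int: "\<And>k. k \<le> n \<Longrightarrow> zval n K \<sigma> y k \<in> interior (Iint n \<sigma> y k)"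
  shows "Determinant.det (jacobian n K \<sigma> y) \<noteq> 0"
proof -
  interpret kern n K unfolding kern_def using periodic real_valued not_pinf lim0 lim2pi C2 neg2 by blast
  define z where "z k = zval n K \<sigma> y k" for k
  have zi: "nd n \<sigma> y k < z k" "z k < nd n \<sigma> y (Suc k)" if "k \<le> n" for k
    using z_int[OF that] unfolding z_def Iint_nd by auto
  define Dm where "Dm k j = d j (tau (z k - y j))" for k j
  have der: "((\<lambda>s. mval n K \<sigma> (y(j:=s)) k) has_real_derivative - Dm k j) (at (y j))"
    if "k \<le> n" "j \<in> {1..n}" for k j
    using AL[OF perm yS that(1) that(2) zi[OF that(1), unfolded z_def]] unfolding Dm_def z_def .
  have Jent: "jacobian n K \<sigma> y $$ (r, c) = Dm r (Suc c) - Dm (Suc r) (Suc c)" if "r < n" "c < n" for r c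
  proof -
    have "((\<lambda>s. Delta n K \<sigma> (y(Suc c := s)) (Suc r)) has_real_derivative
             - Dm (Suc r) (Suc c) - - Dm r (Suc c)) (at (y (Suc c)))"
      unfolding Delta_def using DERIV_diff[OF der der, of "Suc r" "Suc c" r] that by simp
    hence "deriv (\<lambda>s. Delta n K \<sigma> (y(Suc c := s)) (Suc r)) (y (Suc c)) = Dm r (Suc c) - Dm (Suc r) (Suc c)"
      using DERIV_imp_deriv by fastforce
    thus ?thesis unfolding jacobian_def using that by simp
  qed
  have Jc: "jacobian n K \<sigma> y \<in> carrier_mat n n" by (simp add: jacobian_def)
  have zmono: "z k < z k'" if "k < k'" "k' \<le> n" for k k'
    using zi[of k] zi[of k'] nd_mono_le[OF yS, of "Suc k" k'] that by force
  show ?thesis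
  proof (rule diag_dom_det[OF Jc, of "\<lambda>r0. \<sigma> (Suc r0) - 1"])
    fix r0 assume r0: "r0 < n"
    define j where "j = \<sigma> (Suc r0)"
    have jr: "j \<in> {1..n}" unfolding j_def using r0 permutes_in_image[OF perm, of "Suc r0"] by auto
    hence pj: "\<sigma> (Suc r0) - 1 < n" "Suc (\<sigma> (Suc r0) - 1) = j" unfolding j_def by auto
    define P where "P = nd n \<sigma> y (Suc r0)"
    have Pj: "y j = P" unfolding P_def nd_def j_def using jr by (auto simp: ext_pt_def j_def)
    have ejj: "ext_pt n y j = y j" using jr by (auto simp: ext_pt_def)
    define T where "T k = tau (z k - P)" for k
    have DmT: "Dm k j = d j (T k)" for k unfolding Dm_def T_def Pj ..
    have Tr: "0 < T k \<and> T k < 2 * pi" "0 < z k" "z k < 2 * pi" if "k \<le> n" for k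
    proof -
      note g = good[OF perm yS that zi[OF that], of j]
      show "0 < T k \<and> T k < 2 * pi" unfolding T_def using g ejj Pj jr tau_range by auto
      show "0 < z k" "z k < 2 * pi" using g jr by auto
    qed
    have Thi: "T k = z k - P" if "Suc r0 \<le> k" "k \<le> n" for k
    proof -
      have "P \<le> nd n \<sigma> y k" unfolding P_def using nd_mono_le[OF yS that(1)] that by auto
      thus ?thesis using zi[OF that(2)] unfolding T_def tau_def by auto
    qed
    have Tlo: "T k = z k - P + 2 * pi" if "k < Suc r0" "k \<le> n" for k
    proof -
      have "nd n \<sigma> y (Suc k) \<le> P" unfolding P_def using nd_mono_le[OF yS, of "Suc k" "Suc r0"] that r0 by auto
      thus ?thesis using zi[OF that(2)] unfolding T_def tau_def by auto
    qed
    have jn: "j \<le> n" using jr by auto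
    let ?J = "jacobian n K \<sigma> y"
    have "?J $$ (r0, \<sigma> (Suc r0) - 1) = d j (T r0) - d j (T (Suc r0))"
      using Jent[OF r0 pj(1)] pj(2) DmT by simp
    moreover have "d j (T r0) < d j (T (Suc r0))"
    proof (rule d_strict[OF jn])
      show "0 < T (Suc r0)" using Tr(1)[of "Suc r0"] r0 by auto
      show "T (Suc r0) < T r0" using Thi[of "Suc r0"] Tlo[of r0] Tr(2,3)[of r0] Tr(3)[of "Suc r0"] r0 by auto
      show "T r0 < 2 * pi" using Tr(1)[of r0] r0 by auto
    qed
    ultimately have c1: "?J $$ (r0, \<sigma> (Suc r0) - 1) < 0" by simp
    have c2: "?J $$ (r, \<sigma> (Suc r0) - 1) > 0" if r: "r < n" "r \<noteq> r0" for r
    proof -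
      have "?J $$ (r, \<sigma> (Suc r0) - 1) = d j (T r) - d j (T (Suc r))"
        using Jent[OF r(1) pj(1)] pj(2) DmT by simp
      moreover have "d j (T (Suc r)) < d j (T r)"
      proof (rule d_strict[OF jn])
        show "0 < T r" using Tr(1)[of r] r by auto
        show "T (Suc r) < 2 * pi" using Tr(1)[of "Suc r"] r by auto
        show "T r < T (Suc r)"
        proof (cases "r < r0")
          case True thus ?thesis using Tlo[of r] Tlo[of "Suc r"] zmono[of r "Suc r"] r r0 by auto
        next
          case False thus ?thesis using Thi[of r] Thi[of "Suc r"] zmono[of r "Suc r"] r r0 by auto
        qed
      qed
      ultimately show ?thesis by simp
    qed
    have "(\<Sum>r<n. ?J $$ (r, \<sigma> (Suc r0) - 1)) = (\<Sum>r<n. Dm r j - Dm (Suc r) j)"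
      by (rule sum.cong) (use Jent pj in auto)
    also have "\<dots> = Dm 0 j - Dm n j" by (rule sum_lessThan_telescope')
    also have "\<dots> = d j (T 0) - d j (T n)" using DmT by simp
    also have "\<dots> < 0"
    proof -
      have "d j (T 0) < d j (T n)"
      proof (rule d_strict[OF jn])
        show "0 < T n" using Tr(1)[of n] by auto
        show "T n < T 0" using Thi[of n] Tlo[of 0] Tr(2)[of 0] Tr(3)[of n] r0 by auto
        show "T 0 < 2 * pi" using Tr(1)[of 0] by auto
      qed
      thus ?thesis by simp
    qed
    finally have c3: "(\<Sum>r<n. ?J $$ (r, \<sigma> (Suc r0) - 1)) < 0" .
    show "\<sigma> (Suc r0) - 1 < n \<and> ?J $$ (r0, \<sigma> (Suc r0) - 1) < 0 \<and>
          (\<forall>r<n. r \<noteq> r0 \<longrightarrow> 0 < ?J $$ (r, \<sigma> (Suc r0) - 1)) \<and> (\<Sum>r<n. ?J $$ (r, \<sigma> (Suc r0) - 1)) < 0"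
      using pj c1 c2 c3 by auto
  qed
qed


end
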